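(* Let $G$ be a finite $p$-group and let $C_1, C_2,\ldots,C_p$ be proper subgroups of $G$ such that $C_1\neq C_2$ and $|G:C_1|=|G:C_2|=p$. Then there exists a normal subgroup $C$ of $G$ such that $|G:C|=p$, $C\cap C_1=C\cap C_2=C_1\cap C_2$, and $C\not\subseteq C_i$ for all $1\leq i\leq p$. *)

theory Defs
  imports "HOL-Algebra.Algebra"
begin

end

theory Submission imports Defs begin

lemma ar1: assumes "(x::nat) < p" "x = (x + x) mod p" shows "x = 0"
proof (cases "x + x < p")
  case True thus ?thesis using assms by simp
next
  case False
  hence "(x + x) mod p = (x + x - p) mod p" by (simp add: le_mod_geq)
  also have "\<dots> = x + x - p" using assms(1) by simp
  finally show ?thesis using assms by linarith
qed

lemma ar2: assumes "(a::nat) < p" "b < p" "(a + b) mod p = 0" shows "b = (p - a) mod p"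
proof (cases "a = 0")
  case True thus ?thesis using assms by simp
next
  case False
  hence "a + b \<ge> p" using assms by (metis add_gr_0 mod_less not_less neq0_conv)
  hence "(a + b) mod p = (a + b - p) mod p" by (simp add: le_mod_geq)
  also have "\<dots> = a + b - p" using assms by simp
  finally have "a + b = p" using assms \<open>a + b \<ge> p\<close> by linarith
  hence "b = p - a" by linarith
  moreover have "p - a < p" using False assms by linarith
  ultimately show ?thesis by (metis mod_less)
qed

lemma ar3: assumes "(a::nat) < p" "b < p" shows "((a + (p - b) mod p) mod p = 0 \<longleftrightarrow> a = b)"
proof (cases "b = 0")
  case True thus ?thesis using assms by simp
next
  case False
  hence e: "(p - b) mod p = p - b" using assms by simp
  show ?thesis
  proof (cases "a \<ge> b")
    case True
    hence "a + (p - b) = (a - b) + p" using assms by simp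
    hence "(a + (p - b)) mod p = (a - b) mod p" by (metis mod_add_self2)
    also have "\<dots> = a - b" using assms by (meson le_less_trans diff_le_self mod_less)
    finally have "(a + (p - b)) mod p = a - b" .
    thus ?thesis using e True by auto
  next
    case False
    hence "a + (p - b) < p" "0 < a + (p - b)" using assms by auto
    hence "(a + (p - b)) mod p \<noteq> 0" by (metis mod_less not_less0 less_irrefl_nat)
    thus ?thesis using e False by auto
  qed
qed

definition zhom :: "('a, 'b) monoid_scheme \<Rightarrow> nat \<Rightarrow> ('a \<Rightarrow> nat) \<Rightarrow> bool" where
  "zhom G p F \<longleftrightarrow> (\<forall>g\<in>carrier G. F g < p) \<and>
     (\<forall>g\<in>carrier G. \<forall>h\<in>carrier G. F (g \<otimes>\<^bsub>G\<^esub> h) = (F g + F h) mod p)"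

lemma ar4: "((A mod p) + j * (B mod p)) mod (p::nat) = (A + j*B) mod p"
  by (metis mod_add_eq mod_mult_right_eq mod_mod_trivial)

lemma ar5: "((x1 + j*y1) mod p + (x2 + j*y2) mod p) mod (p::nat) = (x1 + x2 + j*(y1+y2)) mod p"
  by (simp add: mod_add_eq algebra_simps)

lemma ar6: "Factorial_Ring.prime (p::nat) \<Longrightarrow> 0 < j \<Longrightarrow> j < p \<Longrightarrow> x < p \<Longrightarrow> ((j * x) mod p = 0) = (x = 0)"
  by (metis linorder_neqE_nat mod_greater_zero_iff_not_dvd mod_less
    not_less_zero prime_dvd_mult_eq_nat)

lemma ar7: "(r::nat) dvd p ^ n \<Longrightarrow> r \<noteq> 1 \<Longrightarrow> Factorial_Ring.prime p \<Longrightarrow> p dvd r"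
  by (metis power_one_right divides_primepow_nat prime_factor_nat prime_power_iff)

context group begin

lemma sub_pow_closed: "subgroup H G \<Longrightarrow> x \<in> H \<Longrightarrow> x [^] (k::nat) \<in> H"
  by (induct k) (auto intro: subgroup.m_closed subgroup.one_closed)

lemma cancel_l1: "x \<in> carrier G \<Longrightarrow> z \<in> carrier G \<Longrightarrow> inv x \<otimes> (x \<otimes> z) = z"
  by (simp add: m_assoc[symmetric])
lemma cancel_l2: "x \<in> carrier G \<Longrightarrow> z \<in> carrier G \<Longrightarrow> x \<otimes> (inv x \<otimes> z) = z"
  by (simp add: m_assoc[symmetric])

lemma conj_pow: "x \<in> carrier G \<Longrightarrow> h \<in> carrier G \<Longrightarrow>
   (x \<otimes> h \<otimes> inv x) [^] (k::nat) = x \<otimes> h [^] k \<otimes> inv x"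
  by (induct k) (simp_all add: m_assoc cancel_l1)

lemma powC:
  assumes H: "subgroup H G" and fin: "finite (carrier G)" and p: "Factorial_Ring.prime p"
    and ord: "order G = p ^ n" and w: "w \<in> carrier G" "w \<notin> H" and k: "0 < k" "k < p"
  shows "w [^] k \<notin> H"
proof
  assume wk: "w [^] k \<in> H"
  have "coprime k p"
    using k p by (metis coprime_commute dvd_imp_le not_less prime_imp_coprime)
  hence "gcd k (p ^ n) = 1" by simp
  then obtain x y where xy: "k * x = p ^ n * y + 1"
    using bezout_nat[of k "p ^ n"] k by auto
  have "w [^] (k * x) \<in> H"
    using sub_pow_closed[OF H wk, of x] w by (simp add: nat_pow_pow)
  moreover have "w [^] (k * x) = w"
  proof -
    have "w [^] (k * x) = (w [^] (p ^ n)) [^] y \<otimes> w [^] (1::nat)"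
      using w by (simp add: xy nat_pow_pow nat_pow_mult mult.commute)
    also have "\<dots> = w" using w pow_order_eq_1[OF w(1)] ord by simp
    finally show ?thesis .
  qed
  ultimately show False using w by simp
qed


lemma pow_diff_aux:
  assumes w: "w \<in> carrier G" "y \<in> carrier G" and ij: "(i::nat) < j"
  shows "(w [^] j \<otimes> y) \<otimes> inv (w [^] i \<otimes> y) = w [^] (j - i)"
proof -
  have "w [^] j = w [^] (j - i) \<otimes> w [^] i" using nat_pow_mult[OF w(1), of "j - i" i] ij by simp
  have a: "inv (w [^] i \<otimes> y) = inv y \<otimes> inv (w [^] i)" using w by (simp add: inv_mult_group)
  have "(w [^] j \<otimes> y) \<otimes> (inv y \<otimes> inv (w [^] i)) = w [^] j \<otimes> inv (w [^] i)"
    using w by (simp add: m_assoc cancel_l2)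
  also have "\<dots> = w [^] (j - i)" using w \<open>w [^] j = _\<close> by (simp add: m_assoc)
  finally show ?thesis using a by simp
qed

lemma cosB:
  assumes H: "subgroup H G" and fin: "finite (carrier G)" and p: "Factorial_Ring.prime p"
    and ord: "order G = p ^ n" and idx: "card (rcosets H) = p"
    and w: "w \<in> carrier G" "w \<notin> H" and y: "y \<in> carrier G" and g: "g \<in> carrier G"
  shows "\<exists>k<p. g \<otimes> inv (w [^] k \<otimes> y) \<in> H"
proof -
  let ?c = "\<lambda>k. H #> (w [^] k \<otimes> y)"
  have ne: "?c i \<noteq> ?c j" if ij: "i < j" "j < p" for i j
  proof
    assume eq: "?c i = ?c j"
    have c1: "w [^] j \<otimes> y \<in> carrier G" "w [^] i \<otimes> y \<in> carrier G" using w y by auto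
    have "w [^] j \<otimes> y \<in> ?c i"
      using repr_independenceD[OF H c1(1) eq] .
    hence "(w [^] j \<otimes> y) \<otimes> inv (w [^] i \<otimes> y) \<in> H"
      using subgroup.rcos_module_imp[OF H is_group c1(2)] by blast
    hence "w [^] (j - i) \<in> H" using pow_diff_aux[OF w(1) y ij(1)] by simp
    thus False using powC[OF H fin p ord w, of "j - i"] ij by simp
  qed
  have inj: "inj_on ?c {..<p}"
  proof (rule inj_onI)
    fix i j assume "i \<in> {..<p}" "j \<in> {..<p}" "?c i = ?c j"
    thus "i = j" using ne by (metis lessThan_iff linorder_neqE_nat)
  qed
  have sub: "?c ` {..<p} \<subseteq> rcosets H"
    using w y rcosetsI[OF subgroup.subset[OF H]] by auto
  have finR: "finite (rcosets H)"
    using fin unfolding RCOSETS_def r_coset_def by auto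
  have "?c ` {..<p} = rcosets H"
    using card_subset_eq[OF finR sub] card_image[OF inj] idx by simp
  moreover have "H #> g \<in> rcosets H" using rcosetsI[OF subgroup.subset[OF H] g] .
  ultimately obtain k where k: "k < p" "H #> g = ?c k" by auto
  have c2: "w [^] k \<otimes> y \<in> carrier G" using w y by auto
  have "g \<in> ?c k" using k(2) rcos_self[OF g H] by simp
  hence "g \<otimes> inv (w [^] k \<otimes> y) \<in> H"
    using subgroup.rcos_module_imp[OF H is_group c2] by blast
  thus ?thesis using k(1) by blast
qed

lemma normalP:
  assumes H: "subgroup H G" and fin: "finite (carrier G)" and p: "Factorial_Ring.prime p"
    and ord: "order G = p ^ n" and idx: "card (rcosets H) = p"
  shows "H \<lhd> G"
proof -
  have "\<forall>x\<in>carrier G. \<forall>h\<in>H. x \<otimes> h \<otimes> inv x \<in> H"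
  proof (intro ballI)
  fix x h assume x: "x \<in> carrier G" and h: "h \<in> H"
  have hG: "h \<in> carrier G" by (rule subgroup.mem_carrier[OF H h])
  show "x \<otimes> h \<otimes> inv x \<in> H"
  proof (rule ccontr)
    let ?w = "x \<otimes> h \<otimes> inv x"
    assume nw: "?w \<notin> H"
    have wG: "?w \<in> carrier G" using x hG by simp
    obtain k where k: "k < p" "\<one> \<otimes> inv (?w [^] k \<otimes> x) \<in> H"
      using cosB[OF H fin p ord idx wG nw x] by blast
    have hk: "h [^] k \<in> H" using sub_pow_closed[OF H h] .
    have hkG: "h [^] k \<in> carrier G" using hG by simp
    have xhk: "x \<otimes> h [^] k \<in> carrier G" using x hG by simp
    have "?w [^] k \<otimes> x = x \<otimes> h [^] k"
      using conj_pow[OF x hG, of k] x hG by (simp add: m_assoc)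
    hence "inv (x \<otimes> h [^] k) \<in> H" using k(2) xhk by simp
    hence "inv (inv (x \<otimes> h [^] k)) \<in> H" by (rule subgroup.m_inv_closed[OF H])
    hence "x \<otimes> h [^] k \<in> H" using xhk by simp
    hence "(x \<otimes> h [^] k) \<otimes> inv (h [^] k) \<in> H"
      by (rule subgroup.m_closed[OF H _ subgroup.m_inv_closed[OF H hk]])
    hence xH: "x \<in> H" using x hkG by (simp add: m_assoc)
    have "?w \<in> H"
      by (rule subgroup.m_closed[OF H subgroup.m_closed[OF H xH h] subgroup.m_inv_closed[OF H xH]])
    thus False using nw by simp
  qed
  qed
  thus ?thesis using H by (simp add: normal_inv_iff)
qed

lemma zh_lt: "zhom G p F \<Longrightarrow> g \<in> carrier G \<Longrightarrow> F g < p"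
  unfolding zhom_def by blast

lemma zh_add: "zhom G p F \<Longrightarrow> g \<in> carrier G \<Longrightarrow> h \<in> carrier G \<Longrightarrow> F (g \<otimes> h) = (F g + F h) mod p"
  unfolding zhom_def by blast

lemma zh_one: assumes "zhom G p F" shows "F \<one> = 0"
proof -
  have "F \<one> = (F \<one> + F \<one>) mod p" using zh_add[OF assms one_closed one_closed] by simp
  thus ?thesis by (rule ar1[OF zh_lt[OF assms one_closed]])
qed

lemma zh_inv: assumes F: "zhom G p F" and g: "g \<in> carrier G" shows "F (inv g) = (p - F g) mod p"
proof -
  have "(F g + F (inv g)) mod p = 0"
    using zh_add[OF F g inv_closed[OF g]] zh_one[OF F] g by simp
  thus ?thesis by (rule ar2[OF zh_lt[OF F g] zh_lt[OF F inv_closed[OF g]]])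
qed

lemma zh_sub: assumes F: "zhom G p F" and g: "g \<in> carrier G" "t \<in> carrier G"
  shows "F (g \<otimes> inv t) = 0 \<longleftrightarrow> F g = F t"
  using zh_add[OF F g(1) inv_closed[OF g(2)]] zh_inv[OF F g(2)] ar3[OF zh_lt[OF F g(1)] zh_lt[OF F g(2)]]
  by simp

lemma zh_subgroup: assumes F: "zhom G p F" shows "subgroup {g \<in> carrier G. F g = 0} G"
proof (rule subgroupI)
  show "{g \<in> carrier G. F g = 0} \<noteq> {}" using zh_one[OF F] by auto
next
  fix a assume a: "a \<in> {g \<in> carrier G. F g = 0}"
  hence "F (inv a) = 0" using zh_inv[OF F] by simp
  thus "inv a \<in> {g \<in> carrier G. F g = 0}" using a by simp
next
  fix a b assume a: "a \<in> {g \<in> carrier G. F g = 0}" and b: "b \<in> {g \<in> carrier G. F g = 0}"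
  thus "a \<otimes> b \<in> {g \<in> carrier G. F g = 0}" using zh_add[OF F] by simp
qed auto

lemma zh_normal: assumes F: "zhom G p F" shows "{g \<in> carrier G. F g = 0} \<lhd> G"
proof -
  have "\<forall>x\<in>carrier G. \<forall>h\<in>{g \<in> carrier G. F g = 0}. x \<otimes> h \<otimes> inv x \<in> {g \<in> carrier G. F g = 0}"
  proof (intro ballI)
    fix x h assume x: "x \<in> carrier G" and h: "h \<in> {g \<in> carrier G. F g = 0}"
    have hG: "h \<in> carrier G" and h0: "F h = 0" using h by auto
    have "F (x \<otimes> h) = F x" using zh_add[OF F x hG] h0 zh_lt[OF F x] by simp
    hence "F ((x \<otimes> h) \<otimes> inv x) = 0" using zh_sub[OF F _ x] x hG by simp
    thus "x \<otimes> h \<otimes> inv x \<in> {g \<in> carrier G. F g = 0}" using x hG by simp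
  qed
  thus ?thesis using zh_subgroup[OF F] by (simp add: normal_inv_iff)
qed

lemma zh_coset: assumes F: "zhom G p F" and t: "t \<in> carrier G"
  shows "{g \<in> carrier G. F g = 0} #> t = {g \<in> carrier G. F g = F t}"
proof -
  have sg: "subgroup {g \<in> carrier G. F g = 0} G" by (rule zh_subgroup[OF F])
  have sub: "{g \<in> carrier G. F g = 0} #> t \<subseteq> carrier G"
    using r_coset_subset_G[OF subgroup.subset[OF sg] t] .
  show ?thesis
  proof (rule Set.set_eqI, rule iffI)
    fix g assume g: "g \<in> {g \<in> carrier G. F g = 0} #> t"
    hence gG: "g \<in> carrier G" using sub by blast
    have "g \<otimes> inv t \<in> {g \<in> carrier G. F g = 0}"
      using subgroup.rcos_module_imp[OF sg is_group t g] .
    hence "F (g \<otimes> inv t) = 0" by simp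
    thus "g \<in> {g \<in> carrier G. F g = F t}" using zh_sub[OF F gG t] gG by simp
  next
    fix g assume g: "g \<in> {g \<in> carrier G. F g = F t}"
    hence gG: "g \<in> carrier G" and "F (g \<otimes> inv t) = 0" using zh_sub[OF F _ t] by auto
    hence "g \<otimes> inv t \<in> {g \<in> carrier G. F g = 0}" using t by simp
    thus "g \<in> {g \<in> carrier G. F g = 0} #> t"
      using subgroup.rcos_module_rev[OF sg is_group t gG] by blast
  qed
qed

lemma zh_card: assumes F: "zhom G p F" and surj: "\<And>r. r < p \<Longrightarrow> \<exists>g\<in>carrier G. F g = r"
  shows "card (rcosets {g \<in> carrier G. F g = 0}) = p"
proof -
  let ?fib = "\<lambda>r. {g \<in> carrier G. F g = r}"
  have eq: "rcosets {g \<in> carrier G. F g = 0} = ?fib ` {..<p}"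
  proof (rule Set.set_eqI, rule iffI)
    fix Q assume "Q \<in> rcosets {g \<in> carrier G. F g = 0}"
    then obtain t where t: "t \<in> carrier G" "Q = {g \<in> carrier G. F g = 0} #> t"
      unfolding RCOSETS_def by auto
    hence "Q = ?fib (F t)" using zh_coset[OF F t(1)] by simp
    thus "Q \<in> ?fib ` {..<p}" using zh_lt[OF F t(1)] by auto
  next
    fix Q assume "Q \<in> ?fib ` {..<p}"
    then obtain r where r: "r < p" "Q = ?fib r" by auto
    obtain t where t: "t \<in> carrier G" "F t = r" using surj[OF r(1)] by auto
    have "Q = {g \<in> carrier G. F g = 0} #> t" using zh_coset[OF F t(1)] t r by simp
    thus "Q \<in> rcosets {g \<in> carrier G. F g = 0}" unfolding RCOSETS_def using t(1) by auto
  qed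
  have inj: "inj_on ?fib {..<p}"
  proof (rule inj_onI)
    fix r s assume r: "r \<in> {..<p}" and s: "s \<in> {..<p}" and e: "?fib r = ?fib s"
    obtain t where t: "t \<in> carrier G" "F t = r" using surj r by auto
    have "t \<in> ?fib r" using t by simp
    hence "t \<in> ?fib s" using e by (simp only:)
    thus "r = s" using t by simp
  qed
  show ?thesis using eq card_image[OF inj] by simp
qed

lemma zh_pow: assumes F: "zhom G p F" and x: "x \<in> carrier G" shows "F (x [^] (m::nat)) = (m * F x) mod p"
proof (induct m)
  case 0 thus ?case using zh_one[OF F] by simp
next
  case (Suc m)
  have "F (x [^] Suc m) = (F (x [^] m) + F x) mod p" using zh_add[OF F nat_pow_closed[OF x] x] by simp
  also have "\<dots> = ((m * F x) mod p + F x) mod p" using Suc by simp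
  also have "\<dots> = (Suc m * F x) mod p" by (simp add: mod_add_left_eq mod_add_right_eq add.commute)
  finally show ?case .
qed

lemma homC:
  assumes H: "subgroup H G" and fin: "finite (carrier G)" and p: "Factorial_Ring.prime p"
    and ord: "order G = p ^ n" and idx: "card (rcosets H) = p"
    and a: "a \<in> carrier G" "a \<notin> H"
  shows "\<exists>f. zhom G p f \<and> (\<forall>g\<in>carrier G. (f g = 0) = (g \<in> H)) \<and> f a = 1"
proof -
  have nH: "H \<lhd> G" by (rule normalP[OF H fin p ord idx])
  have p1: "1 < p" using p by (rule prime_gt_1_nat)
  have aG: "\<And>k. a [^] (k::nat) \<in> carrier G" using a(1) by simp
  have uniq1: False if g: "g \<in> carrier G" and kl: "k < l" "l < p"
      and gk: "g \<otimes> inv (a [^] k) \<in> H" and gl: "g \<otimes> inv (a [^] l) \<in> H" for g k l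
  proof -
    have al: "a [^] l = a [^] (l - k) \<otimes> a [^] k" using nat_pow_mult[OF a(1), of "l - k" k] kl by simp
    have "inv (g \<otimes> inv (a [^] k)) \<otimes> (g \<otimes> inv (a [^] l)) \<in> H"
      by (rule subgroup.m_closed[OF H subgroup.m_inv_closed[OF H gk] gl])
    moreover have "inv (g \<otimes> inv (a [^] k)) \<otimes> (g \<otimes> inv (a [^] l)) = inv (a [^] (l - k))"
    proof -
      have "inv (g \<otimes> inv (a [^] k)) = a [^] k \<otimes> inv g" using g aG by (simp add: inv_mult_group)
      moreover have "inv (a [^] l) = inv (a [^] k) \<otimes> inv (a [^] (l - k))"
        using al aG by (simp add: inv_mult_group)
      ultimately show ?thesis using g aG by (simp add: m_assoc cancel_l1 cancel_l2)
    qed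
    ultimately have "inv (a [^] (l - k)) \<in> H" by simp
    hence "inv (inv (a [^] (l - k))) \<in> H" by (rule subgroup.m_inv_closed[OF H])
    hence "a [^] (l - k) \<in> H" using aG by simp
    thus False using powC[OF H fin p ord a, of "l - k"] kl by simp
  qed
  have uniq: "k = l" if "g \<in> carrier G" "k < p" "l < p"
      "g \<otimes> inv (a [^] k) \<in> H" "g \<otimes> inv (a [^] l) \<in> H" for g k l
  proof (rule ccontr)
    assume "k \<noteq> l"
    hence "k < l \<or> l < k" by arith
    thus False using uniq1 that by metis
  qed
  have ex: "\<exists>k<p. g \<otimes> inv (a [^] k) \<in> H" if g: "g \<in> carrier G" for g
  proof -
    obtain k where "k < p" "g \<otimes> inv (a [^] k \<otimes> \<one>) \<in> H"
      using cosB[OF H fin p ord idx a one_closed g] by auto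
    thus ?thesis using aG by auto
  qed
  define f where "f = (\<lambda>g. THE k. k < p \<and> g \<otimes> inv (a [^] k) \<in> H)"
  have fP: "f g < p \<and> g \<otimes> inv (a [^] f g) \<in> H" if g: "g \<in> carrier G" for g
  proof -
    have "\<exists>!k. k < p \<and> g \<otimes> inv (a [^] k) \<in> H"
      using ex[OF g] uniq[OF g] by auto
    thus ?thesis unfolding f_def by (rule theI')
  qed
  have fU: "f g = k" if g: "g \<in> carrier G" and k: "k < p" "g \<otimes> inv (a [^] k) \<in> H" for g k
    using uniq[OF g _ k(1) _ k(2)] fP[OF g] by simp
  have ap: "a [^] p \<in> H"
  proof -
    obtain k where k: "k < p" "a [^] p \<otimes> inv (a [^] k) \<in> H" using ex[OF aG] by auto
    have "a [^] p = a [^] (p - k) \<otimes> a [^] k" using nat_pow_mult[OF a(1), of "p - k" k] k by simp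
    hence "a [^] p \<otimes> inv (a [^] k) = a [^] (p - k)" using aG by (simp add: m_assoc)
    hence pk: "a [^] (p - k) \<in> H" using k(2) by simp
    show ?thesis
    proof (cases "k = 0")
      case True thus ?thesis using pk by simp
    next
      case False
      thus ?thesis using powC[OF H fin p ord a, of "p - k"] pk k(1) by simp
    qed
  qed
  have add: "f (g \<otimes> h) = (f g + f h) mod p" if g: "g \<in> carrier G" and h: "h \<in> carrier G" for g h
  proof -
    define k where "k = f g"
    define l where "l = f h"
    define m where "m = (k + l) mod p"
    define q where "q = (k + l) div p"
    define u where "u = g \<otimes> inv (a [^] k)"
    define v where "v = h \<otimes> inv (a [^] l)"
    have uH: "u \<in> H" unfolding u_def k_def using fP[OF g] by simp
    have vH: "v \<in> H" unfolding v_def l_def using fP[OF h] by simp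
    have uG: "u \<in> carrier G" using subgroup.mem_carrier[OF H uH] .
    have vG: "v \<in> carrier G" using subgroup.mem_carrier[OF H vH] .
    have gu: "g = u \<otimes> a [^] k" unfolding u_def using g aG by (simp add: m_assoc)
    have hv: "h = v \<otimes> a [^] l" unfolding v_def using h aG by (simp add: m_assoc)
    have KL: "a [^] k \<otimes> a [^] l = (a [^] p) [^] q \<otimes> a [^] m"
      using a(1) by (simp add: nat_pow_mult nat_pow_pow m_def q_def)
    have PH: "(a [^] p) [^] q \<in> H" using sub_pow_closed[OF H ap] .
    have v'H: "a [^] k \<otimes> v \<otimes> inv (a [^] k) \<in> H"
      using nH vH aG by (simp add: normal_inv_iff)
    have e1: "a [^] k \<otimes> a [^] l \<otimes> inv (a [^] m) = (a [^] p) [^] q"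
      using KL aG by (simp add: m_assoc)
    have "g \<otimes> h \<otimes> inv (a [^] m) = u \<otimes> (a [^] k \<otimes> v \<otimes> inv (a [^] k)) \<otimes> (a [^] k \<otimes> a [^] l \<otimes> inv (a [^] m))"
      unfolding gu hv using uG vG aG by (simp add: m_assoc cancel_l1)
    also have "\<dots> = u \<otimes> (a [^] k \<otimes> v \<otimes> inv (a [^] k)) \<otimes> (a [^] p) [^] q" using e1 by simp
    finally have "g \<otimes> h \<otimes> inv (a [^] m) \<in> H"
      using subgroup.m_closed[OF H subgroup.m_closed[OF H uH v'H] PH] by simp
    moreover have "m < p" unfolding m_def using p1 by simp
    ultimately have "f (g \<otimes> h) = m" using fU[OF m_closed[OF g h]] by simp
    thus ?thesis unfolding m_def k_def l_def .
  qed
  have zh: "zhom G p f" unfolding zhom_def using fP add by auto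
  have z: "(f g = 0) = (g \<in> H)" if g: "g \<in> carrier G" for g
  proof
    assume "f g = 0" thus "g \<in> H" using fP[OF g] g by simp
  next
    assume "g \<in> H" thus "f g = 0" using fU[OF g, of 0] p1 g by simp
  qed
  have "f a = 1" using fU[OF a(1), of 1] p1 a(1) subgroup.one_closed[OF H] by simp
  thus ?thesis using zh z by blast
qed

lemma subeq:
  assumes fin: "finite (carrier G)" and p: "Factorial_Ring.prime p" and ord: "order G = p ^ n"
    and K: "subgroup K G" and L: "subgroup L G" and idx: "card (rcosets K) = p"
    and Lp: "L \<noteq> carrier G" and KL: "K \<subseteq> L"
  shows "K = L"
proof -
  have lK: "p * card K = p ^ n" using lagrange[OF K] idx ord by simp
  have lL: "card (rcosets L) * card L = p ^ n" using lagrange[OF L] ord by simp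
  have finL: "finite L" using subgroup.subset[OF L] fin finite_subset by blast
  have r1: "card (rcosets L) \<noteq> 1"
  proof
    assume "card (rcosets L) = 1"
    hence "card L = card (carrier G)" using lL ord unfolding order_def by simp
    hence "L = carrier G" using card_subset_eq[OF fin subgroup.subset[OF L]] by simp
    thus False using Lp by simp
  qed
  have "card (rcosets L) dvd p ^ n" using lL by (metis dvd_triv_left)
  hence "p dvd card (rcosets L)" using ar7 r1 p by blast
  then obtain c where c: "card (rcosets L) = p * c" by blast
  have "c \<noteq> 0" using c lL p by (metis mult_0_right mult_zero_left power_not_zero prime_gt_0_nat less_irrefl_nat)
  hence "p * card L \<le> p * card K"
    using lL lK c by (metis le_add1 mult.assoc mult.commute mult_le_mono1 One_nat_def Suc_leI neq0_conv nat_mult_1_right mult_le_mono2)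
  hence "card L \<le> card K" using p prime_gt_0_nat by simp
  moreover have "card K \<le> card L" using card_mono[OF finL KL] .
  ultimately show ?thesis using card_subset_eq[OF finL KL] by simp
qed
end

theorem lemma4:
  fixes G (structure) and p :: nat and n :: nat and C :: "nat \<Rightarrow> 'a set"
  assumes "group G" and "finite (carrier G)" and "Factorial_Ring.prime p"
    and "order G = p ^ n"
    and "\<And>i. i \<in> {1..p} \<Longrightarrow> subgroup (C i) G \<and> C i \<subset> carrier G"
    and "C 1 \<noteq> C 2"
    and "card (rcosets (C 1)) = p" and "card (rcosets (C 2)) = p"
  shows "\<exists>D. D \<lhd> G \<and> card (rcosets D) = p
           \<and> D \<inter> C 1 = C 1 \<inter> C 2 \<and> D \<inter> C 2 = C 1 \<inter> C 2
           \<and> (\<forall>i\<in>{1..p}. \<not> D \<subseteq> C i)"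
proof -
  interpret group G by fact
  note fin = assms(2) and p = assms(3) and ord = assms(4) and Ci = assms(5)
  have p1: "1 < p" using p by (rule prime_gt_1_nat)
  have i1: "1 \<in> {1..p}" and i2: "2 \<in> {1..p}" using p1 by auto
  have C1: "subgroup (C 1) G" and C2: "subgroup (C 2) G" using Ci[OF i1] Ci[OF i2] by auto
  have fin1: "finite (C 1)" using subgroup.subset[OF C1] fin finite_subset by blast
  have fin2: "finite (C 2)" using subgroup.subset[OF C2] fin finite_subset by blast
  have "p * card (C 1) = p * card (C 2)"
    using lagrange[OF C1] lagrange[OF C2] assms(7,8) by simp
  hence ceq: "card (C 1) = card (C 2)" using p1 by simp
  have "\<not> C 2 \<subseteq> C 1"
  proof
    assume "C 2 \<subseteq> C 1"
    hence "C 2 = C 1" using card_subset_eq[OF fin1] ceq by simp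
    thus False using assms(6) by simp
  qed
  then obtain a where a2: "a \<in> C 2" and a1: "a \<notin> C 1" by auto
  have "\<not> C 1 \<subseteq> C 2"
  proof
    assume "C 1 \<subseteq> C 2"
    hence "C 1 = C 2" using card_subset_eq[OF fin2] ceq by simp
    thus False using assms(6) by simp
  qed
  then obtain b where b1: "b \<in> C 1" and b2: "b \<notin> C 2" by auto
  have aG: "a \<in> carrier G" using subgroup.mem_carrier[OF C2 a2] .
  have bG: "b \<in> carrier G" using subgroup.mem_carrier[OF C1 b1] .
  obtain f1 where f1: "zhom G p f1" "\<forall>g\<in>carrier G. (f1 g = 0) = (g \<in> C 1)" "f1 a = 1"
    using homC[OF C1 fin p ord assms(7) aG a1] by blast
  obtain f2 where f2: "zhom G p f2" "\<forall>g\<in>carrier G. (f2 g = 0) = (g \<in> C 2)" "f2 b = 1"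
    using homC[OF C2 fin p ord assms(8) bG b2] by blast
  have f1b: "f1 b = 0" using f1(2) bG b1 by simp
  have f2a: "f2 a = 0" using f2(2) aG a2 by simp
  define F where "F = (\<lambda>j g. (f1 g + j * f2 g) mod p)"
  define D where "D = (\<lambda>j. {g \<in> carrier G. F j g = 0})"
  have zF: "zhom G p (F j)" for j
    unfolding zhom_def
  proof (intro conjI ballI)
    fix g assume "g \<in> carrier G" thus "F j g < p" unfolding F_def using p1 by simp
  next
    fix g h assume g: "g \<in> carrier G" and h: "h \<in> carrier G"
    have "F j (g \<otimes> h) = ((f1 g + f1 h) mod p + j * ((f2 g + f2 h) mod p)) mod p"
      unfolding F_def using zh_add[OF f1(1) g h] zh_add[OF f2(1) g h] by simp
    also have "\<dots> = (f1 g + f1 h + j * (f2 g + f2 h)) mod p" by (rule ar4)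
    also have "\<dots> = (F j g + F j h) mod p" unfolding F_def by (rule ar5[symmetric])
    finally show "F j (g \<otimes> h) = (F j g + F j h) mod p" .
  qed
  have Fa: "F j (a [^] r) = r" if "r < p" for j r
  proof -
    have "f1 (a [^] r) = r" using zh_pow[OF f1(1) aG, of r] f1(3) that by simp
    moreover have "f2 (a [^] r) = 0" using zh_pow[OF f2(1) aG, of r] f2a by simp
    ultimately show ?thesis unfolding F_def using that by simp
  qed
  have Dn: "D j \<lhd> G" for j unfolding D_def by (rule zh_normal[OF zF])
  have Dc: "card (rcosets (D j)) = p" for j
    unfolding D_def
  proof (rule zh_card[OF zF])
    fix r assume "r < p"
    thus "\<exists>g\<in>carrier G. F j g = r" using Fa[of r j] aG by (intro bexI[of _ "a [^] r"]) auto
  qed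
  have DC1: "D j \<inter> C 1 = C 1 \<inter> C 2" if j: "0 < j" "j < p" for j
  proof (rule Set.set_eqI)
    fix g
    show "g \<in> D j \<inter> C 1 \<longleftrightarrow> g \<in> C 1 \<inter> C 2"
    proof (cases "g \<in> C 1")
      case True
      have gG: "g \<in> carrier G" using subgroup.mem_carrier[OF C1 True] .
      have "f1 g = 0" using f1(2) gG True by simp
      hence "F j g = (j * f2 g) mod p" unfolding F_def by simp
      hence "(F j g = 0) = (f2 g = 0)" using ar6[OF p j zh_lt[OF f2(1) gG]] by simp
      thus ?thesis using True gG f2(2) unfolding D_def by simp
    next
      case False thus ?thesis by simp
    qed
  qed
  have DC2: "D j \<inter> C 2 = C 1 \<inter> C 2" for j
  proof (rule Set.set_eqI)
    fix g
    show "g \<in> D j \<inter> C 2 \<longleftrightarrow> g \<in> C 1 \<inter> C 2"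
    proof (cases "g \<in> C 2")
      case True
      have gG: "g \<in> carrier G" using subgroup.mem_carrier[OF C2 True] .
      have "f2 g = 0" using f2(2) gG True by simp
      hence "F j g = f1 g" unfolding F_def using zh_lt[OF f1(1) gG] by simp
      thus ?thesis using True gG f1(2) unfolding D_def by simp
    next
      case False thus ?thesis by simp
    qed
  qed
  have bD: "b \<notin> D j" if j: "0 < j" "j < p" for j
  proof -
    have "F j b = j" unfolding F_def using f1b f2(3) j by simp
    thus ?thesis using j unfolding D_def by simp
  qed
  have aD: "a \<notin> D j" for j
  proof -
    have "F j a = 1" using Fa[of 1 j] p1 aG by simp
    thus ?thesis unfolding D_def by simp
  qed
  have inj: "inj_on D {1..<p}"
  proof (rule inj_onI)
    fix j k assume j: "j \<in> {1..<p}" and k: "k \<in> {1..<p}" and e: "D j = D k"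
    define g where "g = a [^] (p - j) \<otimes> b"
    have gG: "g \<in> carrier G" unfolding g_def using aG bG by simp
    have g1: "f1 g = (p - j) mod p"
      unfolding g_def using zh_add[OF f1(1) nat_pow_closed[OF aG] bG] zh_pow[OF f1(1) aG, of "p - j"] f1(3) f1b
      by simp
    have g2: "f2 g = 1"
      unfolding g_def using zh_add[OF f2(1) nat_pow_closed[OF aG] bG] zh_pow[OF f2(1) aG, of "p - j"] f2a f2(3) p1
      by simp
    have Fg: "F i g = (i + (p - j) mod p) mod p" for i unfolding F_def using g1 g2 by (simp add: add.commute)
    have "F j g = 0" using Fg[of j] ar3[of j p j] j by simp
    hence "g \<in> D j" using gG unfolding D_def by simp
    hence "g \<in> D k" using e by (simp only:)
    hence "F k g = 0" unfolding D_def by simp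
    thus "j = k" using Fg[of k] ar3[of k p j] j k by simp
  qed
  have "\<exists>j\<in>{1..<p}. \<forall>i\<in>{1..p}. \<not> D j \<subseteq> C i"
  proof (rule ccontr)
    assume "\<not> ?thesis"
    hence h: "\<forall>j\<in>{1..<p}. \<exists>i\<in>{1..p}. D j \<subseteq> C i" by simp
    have "D ` {1..<p} \<subseteq> C ` {3..p}"
    proof
      fix Y assume "Y \<in> D ` {1..<p}"
      then obtain j where j: "j \<in> {1..<p}" "Y = D j" by auto
      obtain i where i: "i \<in> {1..p}" "D j \<subseteq> C i" using h j(1) by blast
      have Cs: "subgroup (C i) G" "C i \<noteq> carrier G" using Ci[OF i(1)] by auto
      have eq: "D j = C i"
        using subeq[OF fin p ord normal_imp_subgroup[OF Dn] Cs(1) Dc Cs(2) i(2)] .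
      have "i \<noteq> 1" using eq bD[of j] b1 j(1) by auto
      moreover have "i \<noteq> 2" using eq aD[of j] a2 by auto
      ultimately have "i \<in> {3..p}" using i(1) by auto
      thus "Y \<in> C ` {3..p}" using eq j(2) by auto
    qed
    hence "card (D ` {1..<p}) \<le> card (C ` {3..p})" by (intro card_mono) auto
    also have "\<dots> \<le> card {3..p}" by (rule card_image_le) simp
    finally have "p - 1 \<le> p + 1 - 3" using card_image[OF inj] by simp
    thus False using p1 by simp
  qed
  then obtain j where j: "j \<in> {1..<p}" "\<forall>i\<in>{1..p}. \<not> D j \<subseteq> C i" by blast
  show ?thesis
    using Dn[of j] Dc[of j] DC1[of j] DC2[of j] j by (intro exI[of _ "D j"]) auto
qed

end
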